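(* Let $H$ be a real Hilbert space, $A:H\to 2^H$ a maximally monotone operator, and $(\gamma_n)$ a sequence of positive reals. Then the family $(J_{\gamma_nA})_{n\in\mathbb{N}}$ is jointly firmly nonexpansive with respect to $(\gamma_n)$.
   Context: For $\gamma>0$, $J_{\gamma A}:=(id_H+\gamma A)^{-1}$, which is single-valued and defined on all of $H$. $(T_n)$ is jointly firmly nonexpansive w.r.t. $(\gamma_n)$ if for all $n,m\in\mathbb{N}$, $x,y\in H$, $\alpha,\beta\in[0,1]$ with $(1-\alpha)\gamma_n=(1-\beta)\gamma_m$: $\|T_nx-T_my\|\le\|((1-\alpha)x+\alpha T_nx)-((1-\beta)y+\beta T_my)\|$. *)

theory Defs
  imports "HOL-Analysis.Analysis"
begin

definition monotone_operator :: "('a::real_inner \<Rightarrow> 'a set) \<Rightarrow> bool" where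
  "monotone_operator A \<longleftrightarrow>
     (\<forall>x y u v. u \<in> A x \<longrightarrow> v \<in> A y \<longrightarrow> 0 \<le> inner (x - y) (u - v))"

definition maximally_monotone :: "('a::real_inner \<Rightarrow> 'a set) \<Rightarrow> bool" where
  "maximally_monotone A \<longleftrightarrow> monotone_operator A \<and>
     (\<forall>B. monotone_operator B \<and> (\<forall>x. A x \<subseteq> B x) \<longrightarrow> B = A)"

text \<open>Resolvent J_{\<gamma>A} = (id + \<gamma>A)^{-1}: J x is the point p with x \<in> p + \<gamma> A p.\<close>
definition resolvent :: "real \<Rightarrow> ('a::real_inner \<Rightarrow> 'a set) \<Rightarrow> 'a \<Rightarrow> 'a" where
  "resolvent \<gamma> A x = (THE p. x \<in> (\<lambda>u. p + \<gamma> *\<^sub>R u) ` A p)"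

definition jointly_firmly_nonexpansive ::
  "(nat \<Rightarrow> 'a::real_normed_vector \<Rightarrow> 'a) \<Rightarrow> (nat \<Rightarrow> real) \<Rightarrow> bool" where
  "jointly_firmly_nonexpansive T \<gamma> \<longleftrightarrow>
     (\<forall>n m x y \<alpha> \<beta>. \<alpha> \<in> {0..1} \<longrightarrow> \<beta> \<in> {0..1} \<longrightarrow>
        (1 - \<alpha>) * \<gamma> n = (1 - \<beta>) * \<gamma> m \<longrightarrow>
        norm (T n x - T m y) \<le>
          norm (((1 - \<alpha>) *\<^sub>R x + \<alpha> *\<^sub>R T n x) - ((1 - \<beta>) *\<^sub>R y + \<beta> *\<^sub>R T m y)))"

end

theory Submission
  imports Defs
begin

lemma small_t:
  fixes a b :: real
  assumes b: "b \<ge> 0" and h: "\<And>t. 0 < t \<Longrightarrow> t \<le> 1 \<Longrightarrow> 0 \<le> a + t * b"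
  shows "0 \<le> a"
proof (rule ccontr)
  assume "\<not> 0 \<le> a"
  hence a: "a < 0" by simp
  define t where "t = min 1 (-a / (2 * b + 1))"
  have "0 < 2 * b + 1" using b by linarith
  hence t0: "0 < t" using a by (auto simp: t_def divide_neg_pos)
  have t1: "t \<le> 1" by (simp add: t_def)
  have "t * b \<le> (-a / (2*b+1)) * b" using b by (intro mult_right_mono) (auto simp: t_def)
  also have "\<dots> < -a"
  proof -
    have p: "0 < 2*b+1" using b by linarith
    have "-a*b < -a*(2*b+1)" using a b by (intro mult_strict_left_mono) auto
    thus ?thesis using p by (simp add: less_divide_eq)
  qed
  finally show False using h[OF t0 t1] by linarith
qed

locale mm =
  fixes A :: "'a::{real_inner, complete_space} \<Rightarrow> 'a set"
  assumes mono: "\<And>x y u v. u \<in> A x \<Longrightarrow> v \<in> A y \<Longrightarrow> 0 \<le> inner (x - y) (u - v)"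
    and maxp: "\<And>p a. (\<And>y v. v \<in> A y \<Longrightarrow> 0 \<le> inner (p - y) (a - v)) \<Longrightarrow> a \<in> A p"
begin

definition G :: "('a \<times> 'a) set" where "G = {(y, v). v \<in> A y}"
definition f :: "'a \<times> 'a \<Rightarrow> 'a \<times> 'a \<Rightarrow> real" where
  "f w z = inner (fst z) (snd w) + inner (fst w) (snd z) - inner (fst w) (snd w)"
definition S where "S = {z. bdd_above ((\<lambda>w. f w z) ` G)}"
definition F where "F z = Sup ((\<lambda>w. f w z) ` G)"
definition Phi where "Phi z = F z + inner z z / 2"

lemma G_ne: "G \<noteq> {}"
proof
  assume "G = {}"
  hence "0 \<in> A 0" by (intro maxp) (auto simp: G_def)
  thus False using \<open>G = {}\<close> by (auto simp: G_def)
qed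

lemma K1: "z \<in> S \<Longrightarrow> w \<in> G \<Longrightarrow> f w z \<le> F z"
  unfolding S_def F_def by (auto intro: cSup_upper)

lemma K2: "(\<And>w. w \<in> G \<Longrightarrow> f w z \<le> b) \<Longrightarrow> z \<in> S \<and> F z \<le> b"
proof -
  assume h: "\<And>w. w \<in> G \<Longrightarrow> f w z \<le> b"
  have "bdd_above ((\<lambda>w. f w z) ` G)" using h by (intro bdd_aboveI2) auto
  moreover have "F z \<le> b" unfolding F_def using G_ne h by (intro cSup_least) auto
  ultimately show ?thesis by (simp add: S_def)
qed

lemma K3: assumes "z \<in> S" shows "inner (fst z) (snd z) \<le> F z"
proof (rule ccontr)
  assume c: "\<not> ?thesis"
  obtain x u where z: "z = (x, u)" by (cases z)
  have "u \<in> A x"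
  proof (rule maxp)
    fix y v assume "v \<in> A y"
    hence "(y, v) \<in> G" by (simp add: G_def)
    from K1[OF assms this] c have "f (y, v) z < inner x u" by (simp add: z)
    thus "0 \<le> inner (x - y) (u - v)" by (simp add: f_def z inner_diff_left inner_diff_right inner_commute)
  qed
  hence "(x, u) \<in> G" by (simp add: G_def)
  from K1[OF assms this] c show False by (simp add: f_def z)
qed

lemma K4: assumes "w \<in> G" shows "w \<in> S \<and> F w \<le> inner (fst w) (snd w)"
proof (rule K2)
  fix w' assume "w' \<in> G"
  with assms have "0 \<le> inner (fst w - fst w') (snd w - snd w')"
    by (auto simp: G_def intro: mono)
  thus "f w' w \<le> inner (fst w) (snd w)"
    by (simp add: f_def inner_diff_left inner_diff_right inner_commute)
qed

lemma f_affine: "f w ((1 - t) *\<^sub>R z1 + t *\<^sub>R z2) = (1 - t) * f w z1 + t * f w z2"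
  by (simp add: f_def inner_add_left inner_add_right algebra_simps)

lemma K5: assumes "z1 \<in> S" "z2 \<in> S" "0 \<le> t" "t \<le> 1"
  shows "(1 - t) *\<^sub>R z1 + t *\<^sub>R z2 \<in> S \<and> F ((1 - t) *\<^sub>R z1 + t *\<^sub>R z2) \<le> (1 - t) * F z1 + t * F z2"
proof (rule K2)
  fix w assume w: "w \<in> G"
  have "(1 - t) * f w z1 \<le> (1 - t) * F z1" using assms K1[OF assms(1) w] by (intro mult_left_mono) auto
  moreover have "t * f w z2 \<le> t * F z2" using assms K1[OF assms(2) w] by (intro mult_left_mono) auto
  ultimately show "f w ((1 - t) *\<^sub>R z1 + t *\<^sub>R z2) \<le> (1 - t) * F z1 + t * F z2"
    by (simp add: f_affine)
qed

lemma Phi_nonneg: assumes "z \<in> S" shows "0 \<le> Phi z"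
proof -
  obtain x u where z: "z = (x, u)" by (cases z)
  have "0 \<le> inner (x + u) (x + u)" by simp
  hence "0 \<le> 2 * inner x u + (inner x x + inner u u)"
    by (simp add: inner_add_left inner_add_right inner_commute)
  hence "0 \<le> inner x u + (inner x x + inner u u) / 2" by (simp add: field_simps)
  thus ?thesis using K3[OF assms] by (simp add: Phi_def z)
qed

definition m where "m = Inf (Phi ` S)"

lemma S_ne: "S \<noteq> {}" using G_ne K4 by blast

lemma m_le: "z \<in> S \<Longrightarrow> m \<le> Phi z"
proof -
  assume z: "z \<in> S"
  have "bdd_below (Phi ` S)" by (rule bdd_belowI2[of _ 0]) (use Phi_nonneg in auto)
  thus ?thesis unfolding m_def using z by (intro cInf_lower) auto
qed

lemma mid_bound:
  assumes "z1 \<in> S" "z2 \<in> S"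
  shows "inner (z1 - z2) (z1 - z2) \<le> 4 * (Phi z1 + Phi z2 - 2 * m)"
proof -
  define mid where "mid = (1 - 1/2) *\<^sub>R z1 + (1/2) *\<^sub>R z2"
  from K5[OF assms, of "1/2"] have ms: "mid \<in> S" and mF: "F mid \<le> (1 - 1/2) * F z1 + (1/2) * F z2"
    by (auto simp: mid_def)
  have "m \<le> Phi mid" using m_le[OF ms] .
  moreover have "inner mid mid = (inner z1 z1 + inner z2 z2) / 2 - inner (z1 - z2) (z1 - z2) / 4"
    unfolding mid_def by (simp add: inner_add_left inner_add_right inner_diff_left inner_diff_right inner_commute algebra_simps) (simp add: field_simps)
  ultimately show ?thesis using mF unfolding Phi_def by (simp add: field_simps)
qed

lemma exists_min: "\<exists>z0\<in>S. Phi z0 \<le> m"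
proof -
  have "\<forall>k. \<exists>z\<in>S. Phi z < m + inverse (real (Suc k))"
  proof
    fix k
    have "Inf (Phi ` S) < m + inverse (real (Suc k))" by (simp add: m_def)
    then obtain y where "y \<in> Phi ` S" "y < m + inverse (real (Suc k))"
      using cInf_lessD[of "Phi ` S"] S_ne by blast
    thus "\<exists>z\<in>S. Phi z < m + inverse (real (Suc k))" by blast
  qed
  then obtain zs where zsS: "\<And>k. zs k \<in> S" and zsP: "\<And>k. Phi (zs k) < m + inverse (real (Suc k))"
    by metis
  have "Cauchy zs"
    unfolding Cauchy_def
  proof (intro allI impI)
    fix e :: real assume e: "0 < e"
    obtain N where N: "inverse (real (Suc N)) < e^2 / 8"
      using reals_Archimedean[of "e^2/8"] e by auto
    show "\<exists>M. \<forall>i\<ge>M. \<forall>j\<ge>M. dist (zs i) (zs j) < e"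
    proof (intro exI[of _ N] allI impI)
      fix i j assume i: "N \<le> i" and j: "N \<le> j"
      have ii: "inverse (real (Suc i)) \<le> inverse (real (Suc N))" using i by (simp add: field_simps)
      have jj: "inverse (real (Suc j)) \<le> inverse (real (Suc N))" using j by (simp add: field_simps)
      have "(norm (zs i - zs j))^2 = inner (zs i - zs j) (zs i - zs j)" by (simp add: power2_norm_eq_inner)
      also have "\<dots> \<le> 4 * (Phi (zs i) + Phi (zs j) - 2 * m)" by (rule mid_bound[OF zsS zsS])
      also have "\<dots> < e^2"
      proof -
        have a: "Phi (zs i) + Phi (zs j) - 2 * m < 2 * inverse (real (Suc N))"
          using zsP[of i] zsP[of j] ii jj by linarith
        have b: "8 * inverse (real (Suc N)) < e^2" using N by linarith
        have c: "4 * (Phi (zs i) + Phi (zs j) - 2 * m) < 8 * inverse (real (Suc N))"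
        proof -
          have gen: "4 * X < 8 * Y" if "X < 2 * Y" for X Y :: real using that by linarith
          show ?thesis by (rule gen[OF a])
        qed
        show ?thesis using c b by (rule less_trans)
      qed
      finally have "(norm (zs i - zs j))^2 < e^2" .
      hence "norm (zs i - zs j) < e" using e by (simp add: power_less_imp_less_base)
      thus "dist (zs i) (zs j) < e" by (simp add: dist_norm)
    qed
  qed
  then obtain z0 where lim: "zs \<longlonglongrightarrow> z0" using Cauchy_convergent convergent_def by blast
  have "z0 \<in> S \<and> F z0 \<le> m - inner z0 z0 / 2"
  proof (rule K2)
    fix w assume w: "w \<in> G"
    have l1: "(\<lambda>k. f w (zs k)) \<longlonglongrightarrow> f w z0"
      unfolding f_def by (intro tendsto_intros lim)
    have l2: "(\<lambda>k. m + inverse (real (Suc k)) - inner (zs k) (zs k) / 2) \<longlonglongrightarrow> m + 0 - inner z0 z0 / 2"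
      by (intro tendsto_intros lim LIMSEQ_inverse_real_of_nat) simp
    have "\<forall>k. f w (zs k) \<le> m + inverse (real (Suc k)) - inner (zs k) (zs k) / 2"
      using K1[OF zsS w] zsP unfolding Phi_def by (metis add.commute le_diff_eq less_eq_real_def order.trans)
    hence "f w z0 \<le> m + 0 - inner z0 z0 / 2" using LIMSEQ_le[OF l1 l2] by blast
    thus "f w z0 \<le> m - inner z0 z0 / 2" by simp
  qed
  thus ?thesis unfolding Phi_def by force
qed

lemma variational:
  assumes z0: "z0 \<in> S" "Phi z0 \<le> m" and w: "w \<in> G"
  shows "0 \<le> inner (fst w) (snd w) - F z0 + inner z0 (w - z0)"
proof (rule small_t)
  show "0 \<le> inner (w - z0) (w - z0) / 2" by simp
  fix t :: real assume t: "0 < t" "t \<le> 1"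
  have wS: "w \<in> S" and Fw: "F w \<le> inner (fst w) (snd w)" using K4[OF w] by auto
  define zt where "zt = (1 - t) *\<^sub>R z0 + t *\<^sub>R w"
  from K5[OF z0(1) wS, of t] t have ztS: "zt \<in> S" and Fzt: "F zt \<le> (1 - t) * F z0 + t * F w"
    by (auto simp: zt_def)
  have "t * F w \<le> t * inner (fst w) (snd w)" using Fw t by (intro mult_left_mono) auto
  have zt2: "zt = z0 + t *\<^sub>R (w - z0)" by (simp add: zt_def algebra_simps)
  have ii: "inner zt zt = inner z0 z0 + 2 * t * inner z0 (w - z0) + t^2 * inner (w - z0) (w - z0)"
    unfolding zt2 by (simp add: inner_add_left inner_add_right inner_diff_left inner_diff_right inner_commute power2_eq_square algebra_simps)
  have "F z0 + inner z0 z0 / 2 \<le> F zt + inner zt zt / 2"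
    using m_le[OF ztS] z0(2) unfolding Phi_def by linarith
  hence k: "F z0 + inner z0 z0 / 2 \<le> (1 - t) * F z0 + t * inner (fst w) (snd w) + inner zt zt / 2"
    using Fzt \<open>t * F w \<le> _\<close> by linarith
  have eq: "t * (inner (fst w) (snd w) - F z0 + inner z0 (w - z0) + t * (inner (w - z0) (w - z0) / 2))
     = ((1 - t) * F z0 + t * inner (fst w) (snd w) + inner zt zt / 2) - (F z0 + inner z0 z0 / 2)"
    unfolding ii by (simp add: algebra_simps power2_eq_square inner_diff_left inner_diff_right inner_commute) (simp add: field_simps)
  have "0 \<le> t * (inner (fst w) (snd w) - F z0 + inner z0 (w - z0) + t * (inner (w - z0) (w - z0) / 2))"
    unfolding eq using k by linarith
  thus "0 \<le> inner (fst w) (snd w) - F z0 + inner z0 (w - z0) + t * (inner (w - z0) (w - z0) / 2)"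
    using t by (simp add: zero_le_mult_iff)
qed

lemma minty0: "\<exists>p. - p \<in> A p"
proof -
  obtain z0 where z0: "z0 \<in> S" "Phi z0 \<le> m" using exists_min by blast
  obtain x u where xu: "z0 = (x, u)" by (cases z0)
  have K: "inner x u \<le> F z0" using K3[OF z0(1)] by (simp add: xu)
  have V: "0 \<le> inner y v - F z0 + inner x (y - x) + inner u (v - u)" if "v \<in> A y" for y v
    using variational[OF z0, of "(y, v)"] that by (simp add: G_def xu)
  have mem: "- x \<in> A (- u)"
  proof (rule maxp)
    fix y v assume yv: "v \<in> A y"
    have "0 \<le> inner (x + u) (x + u)" by simp
    hence "0 \<le> inner (y + u) (v + x)" using V[OF yv] K
      by (simp add: inner_add_left inner_add_right inner_diff_left inner_diff_right inner_commute algebra_simps)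
    thus "0 \<le> inner (- u - y) (- x - v)"
      by (simp add: inner_add_left inner_add_right inner_diff_left inner_diff_right inner_commute algebra_simps)
  qed
  have "0 \<le> inner (x + u) (x + u)" by simp
  moreover have "inner (x + u) (x + u) \<le> 0" using V[OF mem] K
    by (simp add: inner_add_left inner_add_right inner_diff_left inner_diff_right inner_commute algebra_simps)
  ultimately have "inner (x + u) (x + u) = 0" by linarith
  hence "u = - x" by (simp add: add_eq_0_iff)
  thus ?thesis using mem by auto
qed

end

lemma maxp_of:
  assumes "maximally_monotone A"
  shows "\<And>x y u v. u \<in> A x \<Longrightarrow> v \<in> A y \<Longrightarrow> 0 \<le> inner (x - y) (u - v)"
    and "\<And>p a. (\<And>y v. v \<in> A y \<Longrightarrow> 0 \<le> inner (p - y) (a - v)) \<Longrightarrow> a \<in> A p"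
proof -
  have mA: "monotone_operator A" and mx: "\<And>B. monotone_operator B \<Longrightarrow> (\<forall>x. A x \<subseteq> B x) \<Longrightarrow> B = A"
    using assms unfolding maximally_monotone_def by auto
  show "\<And>x y u v. u \<in> A x \<Longrightarrow> v \<in> A y \<Longrightarrow> 0 \<le> inner (x - y) (u - v)"
    using mA unfolding monotone_operator_def by auto
  fix p a assume h: "\<And>y v. v \<in> A y \<Longrightarrow> 0 \<le> inner (p - y) (a - v)"
  define B where "B = (\<lambda>x. A x \<union> (if x = p then {a} else {}))"
  have "monotone_operator B"
    unfolding monotone_operator_def
  proof (intro allI impI)
    fix x y u v assume u: "u \<in> B x" and v: "v \<in> B y"
    show "0 \<le> inner (x - y) (u - v)"
    proof (cases "u \<in> A x")
      case True
      show ?thesis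
      proof (cases "v \<in> A y")
        case True
        with \<open>u \<in> A x\<close> mA show ?thesis unfolding monotone_operator_def by auto
      next
        case False
        hence "y = p" "v = a" using v by (auto simp: B_def split: if_splits)
        have "0 \<le> inner (p - x) (a - u)" using h[OF \<open>u \<in> A x\<close>] .
        hence "0 \<le> inner (x - p) (u - a)"
          by (metis inner_minus_left inner_minus_right minus_diff_eq minus_minus)
        thus ?thesis using \<open>y = p\<close> \<open>v = a\<close> by simp
      qed
    next
      case False
      hence xu: "x = p" "u = a" using u by (auto simp: B_def split: if_splits)
      show ?thesis
      proof (cases "v \<in> A y")
        case True
        thus ?thesis using h[OF True] xu by simp
      next
        case False
        hence "y = p" "v = a" using v by (auto simp: B_def split: if_splits)
        thus ?thesis using xu by simp
      qed
    qed
  qed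
  moreover have "\<forall>x. A x \<subseteq> B x" by (auto simp: B_def)
  ultimately have "B = A" by (rule mx)
  hence "B p = A p" by simp
  thus "a \<in> A p" by (auto simp: B_def)
qed

lemma minty:
  fixes A :: "'a::{real_inner, complete_space} \<Rightarrow> 'a set"
  assumes "maximally_monotone A" and c: "c > 0"
  shows "\<exists>p. \<exists>u\<in>A p. x = p + c *\<^sub>R u"
proof -
  note mo = maxp_of(1)[OF assms(1)] and mp = maxp_of(2)[OF assms(1)]
  define A' where "A' = (\<lambda>q. (\<lambda>u. c *\<^sub>R u) ` A (q + x))"
  have "mm A'"
  proof
    fix q q' u v assume "u \<in> A' q" "v \<in> A' q'"
    then obtain u0 v0 where u0: "u0 \<in> A (q + x)" "u = c *\<^sub>R u0" and v0: "v0 \<in> A (q' + x)" "v = c *\<^sub>R v0"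
      by (auto simp: A'_def)
    have "0 \<le> inner ((q + x) - (q' + x)) (u0 - v0)" by (rule mo[OF u0(1) v0(1)])
    hence "0 \<le> c * inner (q - q') (u0 - v0)" using c by simp
    thus "0 \<le> inner (q - q') (u - v)" using u0(2) v0(2)
      by (simp add: inner_diff_right inner_diff_left algebra_simps)
  next
    fix p a assume h: "\<And>y v. v \<in> A' y \<Longrightarrow> 0 \<le> inner (p - y) (a - v)"
    have "inverse c *\<^sub>R a \<in> A (p + x)"
    proof (rule mp)
      fix y v assume v: "v \<in> A y"
      have "c *\<^sub>R v \<in> A' (y - x)" using v by (auto simp: A'_def)
      from h[OF this] have "0 \<le> inner (p - (y - x)) (a - c *\<^sub>R v)" .
      moreover have "a - c *\<^sub>R v = c *\<^sub>R (inverse c *\<^sub>R a - v)" using c by (simp add: algebra_simps)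
      ultimately have "0 \<le> c * inner (p + x - y) (inverse c *\<^sub>R a - v)"
        by (simp add: algebra_simps)
      thus "0 \<le> inner (p + x - y) (inverse c *\<^sub>R a - v)" using c by (simp add: zero_le_mult_iff)
    qed
    moreover have "a = c *\<^sub>R (inverse c *\<^sub>R a)" using c by simp
    ultimately show "a \<in> A' p" unfolding A'_def by blast
  qed
  from mm.minty0[OF this] obtain q where "- q \<in> A' q" by blast
  then obtain u where u: "u \<in> A (q + x)" "- q = c *\<^sub>R u" by (auto simp: A'_def)
  have z: "q + c *\<^sub>R u = 0" by (simp add: u(2)[symmetric])
  have "q + x + c *\<^sub>R u = x + (q + c *\<^sub>R u)" by (simp add: algebra_simps)
  hence "x = (q + x) + c *\<^sub>R u" using z by simp
  thus ?thesis using u(1) by blast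
qed

lemma resolvent_prop:
  fixes A :: "'a::{real_inner, complete_space} \<Rightarrow> 'a set"
  assumes "maximally_monotone A" and c: "c > 0"
  shows "\<exists>u\<in>A (resolvent c A x). x = resolvent c A x + c *\<^sub>R u"
proof -
  note mo = maxp_of(1)[OF assms(1)]
  have ex: "\<exists>!p. x \<in> (\<lambda>u. p + c *\<^sub>R u) ` A p"
  proof (rule ex_ex1I)
    show "\<exists>p. x \<in> (\<lambda>u. p + c *\<^sub>R u) ` A p" using minty[OF assms, of x] by auto
  next
    fix p q assume "x \<in> (\<lambda>u. p + c *\<^sub>R u) ` A p" "x \<in> (\<lambda>u. q + c *\<^sub>R u) ` A q"
    then obtain u v where u: "u \<in> A p" "x = p + c *\<^sub>R u" and v: "v \<in> A q" "x = q + c *\<^sub>R v" by blast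
    have "0 \<le> inner (p - q) (u - v)" by (rule mo[OF u(1) v(1)])
    moreover have "p - q = c *\<^sub>R (v - u)"
    proof -
      have "p + c *\<^sub>R u = q + c *\<^sub>R v" using u(2) v(2) by simp
      hence "p = q + c *\<^sub>R v - c *\<^sub>R u" by (simp add: eq_diff_eq)
      thus ?thesis by (simp add: scaleR_diff_right)
    qed
    ultimately have "0 \<le> c * inner (v - u) (u - v)" by simp
    hence "0 \<le> inner (v - u) (u - v)" using c by (simp add: zero_le_mult_iff)
    hence "inner (v - u) (v - u) \<le> 0" by (metis inner_minus_right minus_diff_eq neg_0_le_iff_le)
    hence "v - u = 0" using inner_ge_zero[of "v - u"] inner_eq_zero_iff[of "v - u"] by linarith
    hence "v = u" by simp
    thus "p = q" using u(2) v(2) by simp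
  qed
  have "x \<in> (\<lambda>u. resolvent c A x + c *\<^sub>R u) ` A (resolvent c A x)"
    unfolding resolvent_def by (rule theI'[OF ex])
  thus ?thesis by auto
qed

theorem proposition3p21:
  fixes A :: "'a::{real_inner, complete_space} \<Rightarrow> 'a set"
    and \<gamma> :: "nat \<Rightarrow> real"
  assumes "maximally_monotone A"
    and "\<And>n. \<gamma> n > 0"
  shows "jointly_firmly_nonexpansive (\<lambda>n. resolvent (\<gamma> n) A) \<gamma>"
  unfolding jointly_firmly_nonexpansive_def
proof (intro allI impI)
  fix n m x y and \<alpha> \<beta> :: real
  assume a: "\<alpha> \<in> {0..1}" and b: "\<beta> \<in> {0..1}" and e: "(1 - \<alpha>) * \<gamma> n = (1 - \<beta>) * \<gamma> m"
  define p where "p = resolvent (\<gamma> n) A x"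
  define q where "q = resolvent (\<gamma> m) A y"
  obtain u where u: "u \<in> A p" "x = p + \<gamma> n *\<^sub>R u"
    using resolvent_prop[OF assms(1) assms(2)[of n], of x] unfolding p_def[symmetric] by blast
  obtain v where v: "v \<in> A q" "y = q + \<gamma> m *\<^sub>R v"
    using resolvent_prop[OF assms(1) assms(2)[of m], of y] unfolding q_def[symmetric] by blast
  define c where "c = (1 - \<alpha>) * \<gamma> n"
  have c0: "0 \<le> c" using a assms(2)[of n] by (simp add: c_def)
  have l: "(1 - \<alpha>) *\<^sub>R x + \<alpha> *\<^sub>R p = p + c *\<^sub>R u"
    unfolding u(2) c_def by (simp add: algebra_simps)
  have r: "(1 - \<beta>) *\<^sub>R y + \<beta> *\<^sub>R q = q + c *\<^sub>R v"
    unfolding v(2) c_def e by (simp add: algebra_simps)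
  have d: "(p + c *\<^sub>R u) - (q + c *\<^sub>R v) = (p - q) + c *\<^sub>R (u - v)" by (simp add: algebra_simps)
  have mo: "0 \<le> inner (p - q) (u - v)" by (rule maxp_of(1)[OF assms(1) u(1) v(1)])
  have gen: "(norm (a + c *\<^sub>R b))^2 = (norm a)^2 + 2 * c * inner a b + c^2 * (norm b)^2" for a b :: 'a
    unfolding power2_norm_eq_inner by (simp add: inner_add_left inner_add_right inner_commute power2_eq_square algebra_simps)
  have "(norm ((p - q) + c *\<^sub>R (u - v)))^2
      = (norm (p - q))^2 + 2 * c * inner (p - q) (u - v) + c^2 * (norm (u - v))^2"
    by (rule gen)
  moreover have "0 \<le> 2 * c * inner (p - q) (u - v)" using c0 mo by simp
  moreover have "0 \<le> c^2 * (norm (u - v))^2" by simp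
  ultimately have "(norm (p - q))^2 \<le> (norm ((p - q) + c *\<^sub>R (u - v)))^2" by linarith
  hence "norm (p - q) \<le> norm ((p - q) + c *\<^sub>R (u - v))"
    by (rule power2_le_imp_le) simp
  thus "norm (resolvent (\<gamma> n) A x - resolvent (\<gamma> m) A y)
        \<le> norm ((1 - \<alpha>) *\<^sub>R x + \<alpha> *\<^sub>R resolvent (\<gamma> n) A x - ((1 - \<beta>) *\<^sub>R y + \<beta> *\<^sub>R resolvent (\<gamma> m) A y))"
    unfolding p_def[symmetric] q_def[symmetric] l r d .
qed

end
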